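(* Let $n\in\mathbb N$, $p>0$, and let $W\subseteq[n]$ satisfy $p|W|\ge 200\log n$. Let $d$ satisfy $1\le d\le p|W|/(240\log(np))$. Then, with probability $1-o(n^{-2})$ (as $n\to\infty$), in $G=G(n,p)$ every set $U\subseteq V(G)$ with $|U|\le |W|/(4d)$ satisfies $|N(U,W)|\ge d|U|$.
   Context: $G(n,p)$ is the binomial random graph on $[n]$. For $U\subseteq V(G)$, $N(U)=\big(\bigcup_{u\in U}N(u)\big)\setminus U$ and $N(U,W)=N(U)\cap W$. $\log$ is the natural logarithm; $p,W,d$ may depend on $n$. *)

theory Defs
  imports "HOL-Probability.Probability" "HOL-Library.Landau_Symbols"
begin

definition all_edges :: "nat \<Rightarrow> nat set set" where
  "all_edges n = {e. \<exists>i j. i \<in> {1..n} \<and> j \<in> {1..n} \<and> i \<noteq> j \<and> e = {i, j}}"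

definition Gnp :: "nat \<Rightarrow> real \<Rightarrow> nat set set pmf" where
  "Gnp n p = map_pmf (\<lambda>f. {e \<in> all_edges n. f e})
                (Pi_pmf (all_edges n) False (\<lambda>_. bernoulli_pmf p))"

definition nbr :: "nat set set \<Rightarrow> nat \<Rightarrow> nat set" where
  "nbr E u = {v. {u, v} \<in> E}"

definition nbhd :: "nat set set \<Rightarrow> nat set \<Rightarrow> nat set" where
  "nbhd E U = (\<Union>u\<in>U. nbr E u) - U"

definition nbhd_in :: "nat set set \<Rightarrow> nat set \<Rightarrow> nat set \<Rightarrow> nat set" where
  "nbhd_in E U W = nbhd E U \<inter> W"

end

theory Submission
  imports Defs
begin

lemma finite_all_edges: "finite (all_edges n)"
proof -
  have "all_edges n \<subseteq> Pow {1..n}" unfolding all_edges_def by auto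
  thus ?thesis by (rule finite_subset) simp
qed

lemma edge_event:
  assumes A: "A \<subseteq> all_edges n" and B: "B \<subseteq> all_edges n" and AB: "A \<inter> B = {}"
    and p: "0 \<le> p" "p \<le> 1"
  shows "measure_pmf.prob (Gnp n p) {E. A \<subseteq> E \<and> E \<inter> B = {}} = p ^ card A * (1 - p) ^ card B"
proof -
  define X where "X = (\<lambda>e. if e \<in> A then {True} else if e \<in> B then {False} else (UNIV::bool set))"
  have pre: "(\<lambda>f. {e \<in> all_edges n. f e}) -` {E. A \<subseteq> E \<and> E \<inter> B = {}} = Pi (all_edges n) X"
    using A B AB unfolding X_def Pi_def by auto
  have "measure_pmf.prob (Gnp n p) {E. A \<subseteq> E \<and> E \<inter> B = {}}
      = measure_pmf.prob (Pi_pmf (all_edges n) False (\<lambda>_. bernoulli_pmf p)) (Pi (all_edges n) X)"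
    unfolding Gnp_def measure_map_pmf pre ..
  also have "\<dots> = (\<Prod>e\<in>all_edges n. measure_pmf.prob (bernoulli_pmf p) (X e))"
    by (rule measure_Pi_pmf_Pi[OF finite_all_edges])
  also have "\<dots> = (\<Prod>e\<in>all_edges n. if e \<in> A then p else if e \<in> B then 1 - p else 1)"
    using p by (intro prod.cong refl) (auto simp: X_def measure_pmf_single)
  also have "\<dots> = (\<Prod>e\<in>A. p) * (\<Prod>e\<in>B. 1 - p)"
  proof -
    have f: "finite (all_edges n)" by (rule finite_all_edges)
    have "(\<Prod>e\<in>all_edges n. if e \<in> A then p else if e \<in> B then 1 - p else 1)
        = (\<Prod>e\<in>all_edges n \<inter> A. p) * (\<Prod>e\<in>all_edges n - A. if e \<in> B then 1 - p else 1)"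
      by (simp add: prod.If_cases[OF f] Diff_eq)
    also have "(\<Prod>e\<in>all_edges n - A. if e \<in> B then 1 - p else 1) = (\<Prod>e\<in>(all_edges n - A) \<inter> B. 1 - p)"
      by (simp add: prod.If_cases f Diff_eq)
    also have "all_edges n \<inter> A = A" using A by auto
    also have "(all_edges n - A) \<inter> B = B" using B AB by auto
    finally show ?thesis .
  qed
  finally show ?thesis by simp
qed

lemma sum_Pow_card_power:
  fixes a :: real
  assumes "finite S"
  shows "(\<Sum>T\<in>Pow S. a ^ card T) = (1 + a) ^ card S"
  using assms
proof (induction S rule: finite_induct)
  case empty then show ?case by simp
next
  case (insert x S)
  have fin: "finite (Pow S)" "finite (insert x ` Pow S)" using insert by auto
  have disj: "Pow S \<inter> insert x ` Pow S = {}" using insert by auto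
  have inj: "inj_on (insert x) (Pow S)" using insert unfolding inj_on_def by (metis PowD insert_ident subsetD)
  have "(\<Sum>T\<in>Pow (insert x S). a ^ card T) = (\<Sum>T\<in>Pow S. a ^ card T) + (\<Sum>T\<in>insert x ` Pow S. a ^ card T)"
    unfolding Pow_insert using fin disj by (rule sum.union_disjoint)
  also have "(\<Sum>T\<in>insert x ` Pow S. a ^ card T) = (\<Sum>T\<in>Pow S. a ^ card (insert x T))"
    using inj by (simp add: sum.reindex)
  also have "\<dots> = (\<Sum>T\<in>Pow S. a * a ^ card T)"
  proof (intro sum.cong refl)
    fix T assume "T \<in> Pow S"
    then have "finite T" "x \<notin> T" using insert finite_subset by auto
    then show "a ^ card (insert x T) = a * a ^ card T" by simp
  qed
  also have "\<dots> = a * (1 + a) ^ card S" using insert.IH by (simp add: sum_distrib_left[symmetric])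
  finally show ?case using insert by (simp add: algebra_simps)
qed

lemma one_plus_pow_le_exp:
  fixes a :: real assumes "0 \<le> a"
  shows "(1 + a) ^ m \<le> exp (a * m)"
proof -
  have "(1 + a) ^ m \<le> exp a ^ m"
    using assms by (intro power_mono) (auto simp: add.commute exp_ge_add_one_self)
  also have "\<dots> = exp (a * m)" by (simp add: exp_of_nat_mult[symmetric] mult.commute)
  finally show ?thesis .
qed


lemma pmf_union_bound:
  assumes "finite I"
  shows "measure_pmf.prob M (\<Union>i\<in>I. A i) \<le> (\<Sum>i\<in>I. measure_pmf.prob M (A i))"
  by (rule measure_pmf.finite_measure_subadditive_finite[OF assms]) auto

lemma eight_le_exp3: "(8::real) \<le> exp 3"
proof -
  have "(2::real) \<le> exp 1" using exp_ge_add_one_self[of 1] by simp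
  then have "(2::real) ^ 3 \<le> exp 1 ^ 3" by (rule power_mono) simp
  also have "exp 1 ^ 3 = exp (3::real)" by (simp add: exp_of_nat_mult[symmetric])
  finally show ?thesis by simp
qed

lemma one_minus_pow_le_exp:
  fixes p :: real assumes "0 \<le> p" "p \<le> 1"
  shows "(1 - p) ^ k \<le> exp (- p * k)"
proof -
  have "(1 - p) ^ k \<le> exp (- p) ^ k"
    using assms exp_ge_add_one_self[of "-p"] by (intro power_mono) auto
  also have "\<dots> = exp (- p * k)" by (simp add: exp_of_nat_mult[symmetric] mult.commute)
  finally show ?thesis .
qed

lemma term_bound:
  fixes p d w :: real and u t m :: nat
  assumes p: "0 < p" "p \<le> 1" and t: "real t < d * u" and m: "w / 2 \<le> real m"
  shows "real u ^ t * p ^ t * (1 - p) ^ (u * m) \<le> exp (3 * d * u) * exp (- p * u * w / 2) * (u * p / 8) ^ t"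
proof -
  have a: "(1 - p) ^ (u * m) \<le> exp (- p * u * w / 2)"
  proof -
    have "(1 - p) ^ (u * m) \<le> exp (- p * real (u * m))" using p by (intro one_minus_pow_le_exp) auto
    also have "\<dots> \<le> exp (- p * u * w / 2)"
    proof -
      have "p * u * (w / 2) \<le> p * u * m" using p m by (intro mult_left_mono) auto
      then show ?thesis by simp
    qed
    finally show ?thesis .
  qed
  have b: "(8::real) ^ t \<le> exp (3 * d * u)"
  proof -
    have "(8::real) ^ t \<le> exp 3 ^ t" using eight_le_exp3 by (intro power_mono) auto
    also have "\<dots> = exp (3 * real t)" by (simp add: exp_of_nat_mult[symmetric] mult.commute)
    also have "\<dots> \<le> exp (3 * d * u)" using t by simp
    finally show ?thesis .
  qed
  have "real u ^ t * p ^ t = 8 ^ t * (u * p / 8) ^ t" by (simp add: power_mult_distrib[symmetric])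
  then have "real u ^ t * p ^ t * (1 - p) ^ (u * m) = 8 ^ t * (1 - p) ^ (u * m) * (u * p / 8) ^ t" by simp
  also have "\<dots> \<le> exp (3 * d * u) * exp (- p * u * w / 2) * (u * p / 8) ^ t"
    using a b p by (intro mult_mono) auto
  finally show ?thesis .
qed

lemma exp_ln_pow: 
  assumes "n \<ge> (1::nat)"
  shows "exp (- (real k * ln (real n))) = 1 / real n ^ k"
proof -
  have "exp (real k * ln (real n)) = exp (ln (real n)) ^ k" by (rule exp_of_nat_mult)
  also have "\<dots> = real n ^ k" using assms by simp
  finally show ?thesis by (simp add: exp_minus divide_inverse)
qed

lemma U_bound:
  fixes n :: nat and p d :: real and W U :: "nat set"
  assumes n3: "n \<ge> 3" and p: "0 < p" "p \<le> 1" and finW: "finite W"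
    and pw: "200 * ln (real n) \<le> p * real (card W)"
    and d1: "1 \<le> d" and d24: "24 * d \<le> p * real (card W)"
    and U: "finite U" "U \<noteq> {}" "real (card U) \<le> real (card W) / (4 * d)"
  shows "(\<Sum>T\<in>{T. T \<subseteq> W - U \<and> real (card T) < d * real (card U)}.
            real (card U) ^ card T * p ^ card T * (1 - p) ^ (card U * card (W - U - T)))
         \<le> (1 / real n ^ 3) * (1 / real n ^ 47) ^ card U"
proof -
  define w where "w = real (card W)"
  define u where "u = card U"
  define Ts where "Ts = {T. T \<subseteq> W - U \<and> real (card T) < d * real (card U)}"
  have u1: "u \<ge> 1" using U unfolding u_def by (simp add: Suc_le_eq card_gt_0_iff)
  have w0: "w \<ge> 0" unfolding w_def by simp
  have uw: "real u \<le> w / 4"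
  proof -
    have "w / (4 * d) \<le> w / 4" using d1 w0 by (intro divide_left_mono) auto
    then show ?thesis using U unfolding u_def w_def by linarith
  qed
  have duw: "d * u \<le> w / 4"
  proof -
    have "d * u \<le> d * (w / (4 * d))" using U d1 unfolding u_def w_def by (intro mult_left_mono) auto
    also have "\<dots> = w / 4" using d1 by simp
    finally show ?thesis .
  qed
  have finTs: "finite Ts" unfolding Ts_def by (rule finite_subset[of _ "Pow W"]) (auto simp: finW)
  have step1: "real (card U) ^ card T * p ^ card T * (1 - p) ^ (card U * card (W - U - T))
      \<le> exp (3 * d * u) * exp (- p * u * w / 2) * (u * p / 8) ^ card T" if T: "T \<in> Ts" for T
  proof -
    have TW: "T \<subseteq> W" and tl: "real (card T) < d * u" using T unfolding Ts_def u_def by auto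
    have finT: "finite T" using TW finW finite_subset by blast
    have "W \<subseteq> (W - U - T) \<union> U \<union> T" by auto
    then have "card W \<le> card ((W - U - T) \<union> U \<union> T)" using finW U finT by (intro card_mono) auto
    also have "\<dots> \<le> card (W - U - T) + card U + card T" by (meson add_le_mono card_Un_le le_refl order_trans)
    finally have "w \<le> real (card (W - U - T)) + u + card T" unfolding w_def u_def by linarith
    then have m: "w / 2 \<le> real (card (W - U - T))" using uw duw tl by linarith
    show ?thesis unfolding u_def using term_bound[OF p tl[unfolded u_def] m] by simp
  qed
  have "(\<Sum>T\<in>Ts. real (card U) ^ card T * p ^ card T * (1 - p) ^ (card U * card (W - U - T)))
      \<le> (\<Sum>T\<in>Ts. exp (3 * d * u) * exp (- p * u * w / 2) * (u * p / 8) ^ card T)"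
    using step1 by (rule sum_mono)
  also have "\<dots> = exp (3 * d * u) * exp (- p * u * w / 2) * (\<Sum>T\<in>Ts. (u * p / 8) ^ card T)"
    by (simp add: sum_distrib_left)
  also have "(\<Sum>T\<in>Ts. (u * p / 8) ^ card T) \<le> (\<Sum>T\<in>Pow (W - U). (u * p / 8) ^ card T)"
    using finW p by (intro sum_mono2) (auto simp: Ts_def)
  also have "\<dots> = (1 + u * p / 8) ^ card (W - U)" using finW by (intro sum_Pow_card_power) auto
  also have "\<dots> \<le> exp (u * p / 8 * card (W - U))" using p by (intro one_plus_pow_le_exp) auto
  also have "\<dots> \<le> exp (u * p / 8 * w)"
  proof -
    have "card (W - U) \<le> card W" using finW by (intro card_mono) auto
    then have "u * p / 8 * card (W - U) \<le> u * p / 8 * w" unfolding w_def using p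
      by (intro mult_left_mono) auto
    then show ?thesis by simp
  qed
  also have "exp (3 * d * u) * exp (- p * u * w / 2) * exp (u * p / 8 * w)
      = exp (3 * d * u - p * u * w / 2 + u * p / 8 * w)" by (simp only: exp_add[symmetric]) (simp add: algebra_simps)
  also have "\<dots> \<le> exp (- (real (50 * u) * ln (real n)))"
  proof -
    have "24 * d * u \<le> p * w * u" using d24 unfolding w_def by (intro mult_right_mono) auto
    moreover have "200 * ln (real n) * u \<le> p * w * u" using pw unfolding w_def by (intro mult_right_mono) auto
    ultimately show ?thesis by (simp add: algebra_simps)
  qed
  also have "\<dots> = 1 / real n ^ (50 * u)" using n3 by (intro exp_ln_pow) auto
  also have "\<dots> \<le> (1 / real n ^ 3) * (1 / real n ^ 47) ^ u"
  proof -
    have "(1 / real n ^ 3) * (1 / real n ^ 47) ^ u = 1 / real n ^ (3 + 47 * u)"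
      by (simp add: power_mult power_add power_divide)
    also have "1 / real n ^ (50 * u) \<le> 1 / real n ^ (3 + 47 * u)"
      using n3 u1 by (intro divide_left_mono power_increasing) auto
    finally show ?thesis by simp
  qed
  finally show ?thesis unfolding Ts_def u_def
    using exp_ge_zero by (smt (verit) mult_left_mono mult_nonneg_nonneg)
qed

lemma main_bound:
  fixes n :: nat and p d :: real and W :: "nat set"
  assumes n3: "n \<ge> 3" and p: "0 < p" "p \<le> 1" and Wsub: "W \<subseteq> {1..n}"
    and pw: "200 * ln (real n) \<le> p * real (card W)"
    and d1: "1 \<le> d" and d24: "24 * d \<le> p * real (card W)"
  shows "measure_pmf.prob (Gnp n p)
            {E. \<not> (\<forall>U \<subseteq> {1..n}. real (card U) \<le> real (card W) / (4 * d) \<longrightarrow>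
                      real (card (nbhd_in E U W)) \<ge> d * real (card U))} \<le> exp 1 / real n ^ 3"
proof -
  define w where "w = real (card W)"
  define Us where "Us = {U. U \<subseteq> {1..n} \<and> U \<noteq> {} \<and> real (card U) \<le> w / (4 * d)}"
  define Ts where "Ts = (\<lambda>U. {T. T \<subseteq> W - U \<and> real (card T) < d * real (card U)})"
  define Aset where "Aset = (\<lambda>T (g::nat\<Rightarrow>nat). (\<lambda>x. {g x, x}) ` T)"
  define Bset where "Bset = (\<lambda>U T. (\<lambda>(x,y). {x,y::nat}) ` (U \<times> (W - U - T)))"
  define Ev where "Ev = (\<lambda>U T g. {E. Aset T g \<subseteq> E \<and> E \<inter> Bset U T = {}})"
  define Bad where "Bad = {E. \<not> (\<forall>U \<subseteq> {1..n}. real (card U) \<le> real (card W) / (4 * d) \<longrightarrow>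
                      real (card (nbhd_in E U W)) \<ge> d * real (card U))}"
  have finW: "finite W" using Wsub finite_subset by blast
  have finUs: "finite Us" by (rule finite_subset[of _ "Pow {1..n}"]) (auto simp: Us_def)
  have finTs: "finite (Ts U)" for U by (rule finite_subset[of _ "Pow W"]) (auto simp: Ts_def finW)
  have finU: "U \<in> Us \<Longrightarrow> finite U" for U unfolding Us_def using finite_subset by auto
  have finT: "T \<in> Ts U \<Longrightarrow> finite T" for T U unfolding Ts_def using finW finite_subset by auto
  have finG: "U \<in> Us \<Longrightarrow> T \<in> Ts U \<Longrightarrow> finite (PiE T (\<lambda>_. U))" for U T
    using finU finT by (intro finite_PiE) auto
  have wpos: "w > 0"
  proof -
    have "ln (real n) > 0" using n3 by simp
    then have "p * w > 0" using pw unfolding w_def by linarith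
    then show ?thesis using p zero_less_mult_pos by blast
  qed
  have cover: "Bad \<subseteq> (\<Union>U\<in>Us. \<Union>T\<in>Ts U. \<Union>g\<in>PiE T (\<lambda>_. U). Ev U T g)"
  proof
    fix E assume "E \<in> Bad"
    then obtain U where U: "U \<subseteq> {1..n}" "real (card U) \<le> w / (4 * d)"
        and small: "real (card (nbhd_in E U W)) < d * real (card U)"
      unfolding Bad_def w_def by auto
    have Une: "U \<noteq> {}" using small by auto
    define T where "T = nbhd_in E U W"
    have TW: "T \<subseteq> W - U" unfolding T_def nbhd_in_def nbhd_def by auto
    have ex: "\<forall>x\<in>T. \<exists>u\<in>U. {u, x} \<in> E" unfolding T_def nbhd_in_def nbhd_def nbr_def by auto
    define g where "g = (\<lambda>x\<in>T. SOME u. u \<in> U \<and> {u, x} \<in> E)"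
    have g: "g x \<in> U \<and> {g x, x} \<in> E" if "x \<in> T" for x
      using someI_ex[of "\<lambda>u. u \<in> U \<and> {u, x} \<in> E"] ex that unfolding g_def by auto
    have gP: "g \<in> PiE T (\<lambda>_. U)" using g unfolding g_def PiE_def extensional_def by auto
    have "Aset T g \<subseteq> E" using g unfolding Aset_def by auto
    moreover have "E \<inter> Bset U T = {}"
    proof (rule ccontr)
      assume "E \<inter> Bset U T \<noteq> {}"
      then obtain x y where xy: "x \<in> U" "y \<in> W - U - T" "{x, y} \<in> E" unfolding Bset_def by auto
      then have "y \<in> T" unfolding T_def nbhd_in_def nbhd_def nbr_def by auto
      with xy show False by auto
    qed
    ultimately have "E \<in> Ev U T g" unfolding Ev_def by auto
    moreover have "U \<in> Us" using U Une unfolding Us_def by auto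
    moreover have "T \<in> Ts U" using TW small unfolding Ts_def T_def by auto
    ultimately show "E \<in> (\<Union>U\<in>Us. \<Union>T\<in>Ts U. \<Union>g\<in>PiE T (\<lambda>_. U). Ev U T g)" using gP by blast
  qed
  have evprob: "measure_pmf.prob (Gnp n p) (Ev U T g) = p ^ card T * (1 - p) ^ (card U * card (W - U - T))"
    if U: "U \<in> Us" and T: "T \<in> Ts U" and g: "g \<in> PiE T (\<lambda>_. U)" for U T g
  proof -
    have U1: "U \<subseteq> {1..n}" using U unfolding Us_def by auto
    have T1: "T \<subseteq> W - U" using T unfolding Ts_def by auto
    have gU: "x \<in> T \<Longrightarrow> g x \<in> U" for x using g by auto
    have A: "Aset T g \<subseteq> all_edges n"
    proof
      fix e assume "e \<in> Aset T g"
      then obtain x where x: "x \<in> T" "e = {g x, x}" unfolding Aset_def by auto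
      have "g x \<in> U" "x \<in> W" "x \<notin> U" using gU T1 x by auto
      then have "g x \<in> {1..n}" "x \<in> {1..n}" "g x \<noteq> x" using U1 Wsub by (metis subsetD)+
      then show "e \<in> all_edges n" unfolding all_edges_def using x by blast
    qed
    have B: "Bset U T \<subseteq> all_edges n"
    proof
      fix e assume "e \<in> Bset U T"
      then obtain x y where x: "x \<in> U" "y \<in> W - U - T" "e = {x, y}" unfolding Bset_def by auto
      then have "x \<in> {1..n}" "y \<in> {1..n}" "x \<noteq> y" using U1 Wsub by (auto dest: subsetD)
      then show "e \<in> all_edges n" unfolding all_edges_def using x by blast
    qed
    have AB: "Aset T g \<inter> Bset U T = {}"
    proof (rule ccontr)
      assume "Aset T g \<inter> Bset U T \<noteq> {}"
      then obtain x a b where "x \<in> T" "a \<in> U" "b \<in> W - U - T" "{g x, x} = {a, b}"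
        unfolding Aset_def Bset_def by auto
      moreover have "g x \<in> U" "x \<notin> U" using gU T1 \<open>x \<in> T\<close> by auto
      ultimately show False by (auto simp: doubleton_eq_iff)
    qed
    have cA: "card (Aset T g) = card T"
      unfolding Aset_def
    proof (rule card_image)
      show "inj_on (\<lambda>x. {g x, x}) T"
      proof (rule inj_onI)
        fix x y assume "x \<in> T" "y \<in> T" "{g x, x} = {g y, y}"
        moreover have "g x \<in> U" "g y \<in> U" "x \<notin> U" "y \<notin> U" using gU T1 \<open>x \<in> T\<close> \<open>y \<in> T\<close> by auto
        ultimately show "x = y" by (auto simp: doubleton_eq_iff)
      qed
    qed
    have injB: "inj_on (\<lambda>(x, y). {x, y}) (U \<times> (W - U - T))"
      by (auto simp: inj_on_def doubleton_eq_iff)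
    have cB: "card (Bset U T) = card U * card (W - U - T)"
      unfolding Bset_def using card_image[OF injB] by (simp add: card_cartesian_product)
    show ?thesis unfolding Ev_def
      using edge_event[OF A B AB, of p] p cA cB by simp
  qed
  have "measure_pmf.prob (Gnp n p) Bad
      \<le> measure_pmf.prob (Gnp n p) (\<Union>U\<in>Us. \<Union>T\<in>Ts U. \<Union>g\<in>PiE T (\<lambda>_. U). Ev U T g)"
    using cover by (intro measure_pmf.finite_measure_mono) auto
  also have "\<dots> \<le> (\<Sum>U\<in>Us. measure_pmf.prob (Gnp n p) (\<Union>T\<in>Ts U. \<Union>g\<in>PiE T (\<lambda>_. U). Ev U T g))"
    using finUs by (rule pmf_union_bound)
  also have "\<dots> \<le> (\<Sum>U\<in>Us. \<Sum>T\<in>Ts U. \<Sum>g\<in>PiE T (\<lambda>_. U). measure_pmf.prob (Gnp n p) (Ev U T g))"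
  proof (rule sum_mono)
    fix U assume U: "U \<in> Us"
    have "measure_pmf.prob (Gnp n p) (\<Union>T\<in>Ts U. \<Union>g\<in>PiE T (\<lambda>_. U). Ev U T g)
        \<le> (\<Sum>T\<in>Ts U. measure_pmf.prob (Gnp n p) (\<Union>g\<in>PiE T (\<lambda>_. U). Ev U T g))"
      using finTs by (rule pmf_union_bound)
    also have "\<dots> \<le> (\<Sum>T\<in>Ts U. \<Sum>g\<in>PiE T (\<lambda>_. U). measure_pmf.prob (Gnp n p) (Ev U T g))"
      using finG[OF U] by (intro sum_mono pmf_union_bound)
    finally show "measure_pmf.prob (Gnp n p) (\<Union>T\<in>Ts U. \<Union>g\<in>PiE T (\<lambda>_. U). Ev U T g)
        \<le> (\<Sum>T\<in>Ts U. \<Sum>g\<in>PiE T (\<lambda>_. U). measure_pmf.prob (Gnp n p) (Ev U T g))" .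
  qed
  also have "\<dots> = (\<Sum>U\<in>Us. \<Sum>T\<in>Ts U.
            real (card U) ^ card T * p ^ card T * (1 - p) ^ (card U * card (W - U - T)))"
  proof (intro sum.cong refl)
    fix U T assume U: "U \<in> Us" and T: "T \<in> Ts U"
    have "(\<Sum>g\<in>PiE T (\<lambda>_. U). measure_pmf.prob (Gnp n p) (Ev U T g))
        = (\<Sum>g\<in>PiE T (\<lambda>_. U). p ^ card T * (1 - p) ^ (card U * card (W - U - T)))"
      using evprob[OF U T] by (intro sum.cong refl) auto
    also have "\<dots> = real (card U) ^ card T * p ^ card T * (1 - p) ^ (card U * card (W - U - T))"
      using finT[OF T] by (simp add: card_PiE)
    finally show "(\<Sum>g\<in>PiE T (\<lambda>_. U). measure_pmf.prob (Gnp n p) (Ev U T g))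
        = real (card U) ^ card T * p ^ card T * (1 - p) ^ (card U * card (W - U - T))" .
  qed
  also have "\<dots> \<le> (\<Sum>U\<in>Us. (1 / real n ^ 3) * (1 / real n ^ 47) ^ card U)"
  proof (rule sum_mono)
    fix U assume U: "U \<in> Us"
    show "(\<Sum>T\<in>Ts U. real (card U) ^ card T * p ^ card T * (1 - p) ^ (card U * card (W - U - T)))
        \<le> (1 / real n ^ 3) * (1 / real n ^ 47) ^ card U"
      unfolding Ts_def using U_bound[OF n3 p finW pw d1 d24 finU[OF U]] U unfolding Us_def w_def by auto
  qed
  also have "\<dots> \<le> (\<Sum>U\<in>Pow {1..n}. (1 / real n ^ 3) * (1 / real n ^ 47) ^ card U)"
    by (intro sum_mono2) (auto simp: Us_def)
  also have "\<dots> = (1 / real n ^ 3) * (1 + 1 / real n ^ 47) ^ n"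
    by (subst sum_distrib_left[symmetric], subst sum_Pow_card_power) auto
  also have "\<dots> \<le> (1 / real n ^ 3) * exp 1"
  proof -
    have "(1 + 1 / real n ^ 47) ^ n \<le> exp (1 / real n ^ 47 * n)" by (intro one_plus_pow_le_exp) auto
    also have "\<dots> \<le> exp 1"
    proof -
      have "real n \<le> real n ^ 47" using power_increasing[of 1 47 "real n"] n3 by simp
      then have "1 / real n ^ 47 * n \<le> 1" using n3 by (simp add: field_simps)
      then show ?thesis by simp
    qed
    finally show ?thesis by (intro mult_left_mono) auto
  qed
  finally show ?thesis unfolding Bad_def by simp
qed


lemma d24_lemma:
  fixes n :: nat and p d :: real and W :: "nat set"
  assumes n3: "n \<ge> 3" and p: "0 < p" "p \<le> 1" and Wsub: "W \<subseteq> {1..n}"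
    and pw: "200 * ln (real n) \<le> p * real (card W)"
    and d: "1 \<le> d" "d \<le> p * real (card W) / (240 * ln (real n * p))"
  shows "24 * d \<le> p * real (card W)"
proof -
  have "card W \<le> card {1..n}" using Wsub by (intro card_mono) auto
  then have cW: "real (card W) \<le> real n" by simp
  have "1 \<le> ln (3::real)" using exp_le by (subst ln_ge_iff) auto
  also have "ln 3 \<le> ln (real n)" using n3 by simp
  finally have "200 \<le> p * real (card W)" using pw by linarith
  also have "p * real (card W) \<le> real n * p" using cW p by (simp add: mult.commute mult_left_mono)
  finally have np: "200 \<le> real n * p" .
  have "1 \<le> ln (real n * p)" using np exp_le by (subst ln_ge_iff) auto
  then have pos: "0 < 240 * ln (real n * p)" by simp
  have "d * (240 * ln (real n * p)) \<le> p * real (card W)" using d(2) pos by (simp add: pos_le_divide_eq)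
  moreover have "d * 240 \<le> d * (240 * ln (real n * p))" using \<open>1 \<le> ln (real n * p)\<close> d(1) by simp
  ultimately show ?thesis using d(1) by linarith
qed

theorem lemma3p39:
  fixes p :: "nat \<Rightarrow> real" and W :: "nat \<Rightarrow> nat set" and d :: "nat \<Rightarrow> real"
  assumes "\<forall>\<^sub>F n in sequentially. 0 < p n \<and> p n \<le> 1"
      and "\<forall>\<^sub>F n in sequentially. W n \<subseteq> {1..n}"
      and "\<forall>\<^sub>F n in sequentially. p n * real (card (W n)) \<ge> 200 * ln (real n)"
      and "\<forall>\<^sub>F n in sequentially. 1 \<le> d n \<and>
             d n \<le> p n * real (card (W n)) / (240 * ln (real n * p n))"
  shows "(\<lambda>n. measure_pmf.prob (Gnp n (p n))
            {E. \<not> (\<forall>U \<subseteq> {1..n}. real (card U) \<le> real (card (W n)) / (4 * d n) \<longrightarrow>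
                      real (card (nbhd_in E U (W n))) \<ge> d n * real (card U))})
         \<in> o(\<lambda>n. 1 / real n ^ 2)"
proof -
  have ev: "\<forall>\<^sub>F n in sequentially. norm (measure_pmf.prob (Gnp n (p n))
            {E. \<not> (\<forall>U \<subseteq> {1..n}. real (card U) \<le> real (card (W n)) / (4 * d n) \<longrightarrow>
                      real (card (nbhd_in E U (W n))) \<ge> d n * real (card U))})
         \<le> exp 1 * norm (1 / real n ^ 3)"
    using assms(1-4) eventually_ge_at_top[of 3]
  proof eventually_elim
    case (elim n)
    have d24: "24 * d n \<le> p n * real (card (W n))"
      using d24_lemma[of n "p n" "W n" "d n"] elim by auto
    have "measure_pmf.prob (Gnp n (p n))
            {E. \<not> (\<forall>U \<subseteq> {1..n}. real (card U) \<le> real (card (W n)) / (4 * d n) \<longrightarrow>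
                      real (card (nbhd_in E U (W n))) \<ge> d n * real (card U))} \<le> exp 1 / real n ^ 3"
      using main_bound[of n "p n" "W n" "d n"] elim d24 by auto
    then show ?case by simp
  qed
  have "(\<lambda>n. measure_pmf.prob (Gnp n (p n))
            {E. \<not> (\<forall>U \<subseteq> {1..n}. real (card U) \<le> real (card (W n)) / (4 * d n) \<longrightarrow>
                      real (card (nbhd_in E U (W n))) \<ge> d n * real (card U))})
         \<in> O(\<lambda>n. 1 / real n ^ 3)"
    using ev by (rule bigoI)
  moreover have "(\<lambda>n. 1 / real n ^ 3) \<in> o(\<lambda>n. 1 / real n ^ 2)"
  proof (rule landau_o.smallI)
    fix c :: real assume c: "0 < c"
    obtain N :: nat where N: "1 / c < real N" using reals_Archimedean2 by blast
    show "\<forall>\<^sub>F n in sequentially. norm (1 / real n ^ 3) \<le> c * norm (1 / real n ^ 2)"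
      using eventually_ge_at_top[of "N + 1"]
    proof eventually_elim
      case (elim n)
      then have n: "1 / c < real n" "0 < real n" using N by auto
      then have "1 < c * real n" using c by (simp add: field_simps)
      then have "1 / real n ^ 3 \<le> c * real n / real n ^ 3" using n by (intro divide_right_mono) auto
      also have "c * real n / real n ^ 3 = c * (1 / real n ^ 2)" using n by (simp add: power3_eq_cube power2_eq_square)
      finally show ?case by simp
    qed
  qed
  ultimately show ?thesis by (rule landau_o.big_small_trans)
qed

end
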